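(* The algebra $(\mathcal{T}_\bullet,\overline{\ast})$ is a free associative algebra, freely generated by the set of non-empty reduced set compositions in $\mathsf{Comp}=\bigcup_{n\ge0}\mathsf{Comp}_n$.
   Context: $[n]=\{1,\ldots,n\}$. A set composition of $[n]$ is a tuple $(P_1,\ldots,P_k)$ of pairwise disjoint non-empty subsets with union $[n]$; $\mathsf{Comp}_n$ is the set of them ($\mathsf{Comp}_0$ consists of the empty tuple). $\mathcal{T}_n$ is the free $\mathbb{Z}$-module on $\mathsf{Comp}_n$ and $\mathcal{T}_\bullet=\bigoplus_{n\ge0}\mathcal{T}_n$. The restricted product is defined bilinearly by $(P_1,\ldots,P_k)\,\overline{\ast}\,(Q_1,\ldots,Q_l)=(P_1,\ldots,P_k,p+Q_1,\ldots,p+Q_l)$ for $(P_1,\ldots,P_k)\in\mathsf{Comp}_p$, $(Q_1,\ldots,Q_l)\in\mathsf{Comp}_q$, where $p+X=\{p+x:x\in X\}$; its unit is the empty tuple. A set composition $(P_1,\ldots,P_k)\in\mathsf{Comp}_n$ is reduced if there is no pair $(a,m)$ with $1\le a<k$ and $m<n$ such that $P_1\cup\cdots\cup P_a=[m]$. *)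

theory Defs
  imports Main "HOL-Library.Poly_Mapping"
begin

definition is_comp_of :: "nat \<Rightarrow> nat set list \<Rightarrow> bool" where
  "is_comp_of n Ps \<longleftrightarrow>
     (\<forall>i<length Ps. Ps ! i \<noteq> {}) \<and>
     (\<forall>i<length Ps. \<forall>j<length Ps. i \<noteq> j \<longrightarrow> Ps ! i \<inter> Ps ! j = {}) \<and>
     \<Union> (set Ps) = {1..n}"

definition Comp :: "nat \<Rightarrow> nat set list set" where
  "Comp n = {Ps. is_comp_of n Ps}"

definition AllComp :: "nat set list set" where
  "AllComp = (\<Union>n. Comp n)"

text \<open>The n with Ps in Comp n (the number of elements of the underlying set).\<close>
definition comp_size :: "nat set list \<Rightarrow> nat" where
  "comp_size Ps = card (\<Union> (set Ps))"

definition shift_set :: "nat \<Rightarrow> nat set \<Rightarrow> nat set" where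
  "shift_set p X = (\<lambda>x. p + x) ` X"

definition rcomp :: "nat set list \<Rightarrow> nat set list \<Rightarrow> nat set list" where
  "rcomp Ps Qs = Ps @ map (shift_set (comp_size Ps)) Qs"

text \<open>T_bullet: the free Z-module on all set compositions, i.e. finitely supported
  integer-valued functions supported on compositions.\<close>
definition TT :: "(nat set list \<Rightarrow>\<^sub>0 int) set" where
  "TT = {a. Poly_Mapping.keys a \<subseteq> AllComp}"

definition rprod :: "(nat set list \<Rightarrow>\<^sub>0 int) \<Rightarrow> (nat set list \<Rightarrow>\<^sub>0 int) \<Rightarrow> (nat set list \<Rightarrow>\<^sub>0 int)" where
  "rprod a b = (\<Sum>p\<in>Poly_Mapping.keys a. \<Sum>q\<in>Poly_Mapping.keys b.
       Poly_Mapping.single (rcomp p q) (Poly_Mapping.lookup a p * Poly_Mapping.lookup b q))"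

definition runit :: "nat set list \<Rightarrow>\<^sub>0 int" where
  "runit = Poly_Mapping.single [] 1"

definition reduced :: "nat set list \<Rightarrow> bool" where
  "reduced Ps \<longleftrightarrow> \<not> (\<exists>a m. 1 \<le> a \<and> a < length Ps \<and> m < comp_size Ps \<and>
        \<Union> (set (take a Ps)) = {1..m})"

definition Generators :: "nat set list set" where
  "Generators = {Ps \<in> AllComp. Ps \<noteq> [] \<and> reduced Ps}"

text \<open>Unital ring homomorphisms (= Z-algebra homomorphisms) from (T, rprod) into a ring.\<close>
definition is_alg_hom :: "((nat set list \<Rightarrow>\<^sub>0 int) \<Rightarrow> 'a::ring_1) \<Rightarrow> bool" where
  "is_alg_hom \<phi> \<longleftrightarrow>
     (\<forall>a\<in>TT. \<forall>b\<in>TT. \<phi> (a + b) = \<phi> a + \<phi> b \<and> \<phi> (rprod a b) = \<phi> a * \<phi> b) \<and>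
     \<phi> runit = 1"

definition freely_generated_by :: "nat set list set \<Rightarrow> ('a::ring_1) itself \<Rightarrow> bool" where
  "freely_generated_by X _ \<longleftrightarrow>
     (\<forall>f :: nat set list \<Rightarrow> 'a.
        \<exists>\<phi>. is_alg_hom \<phi> \<and> (\<forall>x\<in>X. \<phi> (Poly_Mapping.single x 1) = f x) \<and>
           (\<forall>\<psi>. is_alg_hom \<psi> \<and> (\<forall>x\<in>X. \<psi> (Poly_Mapping.single x 1) = f x)
                 \<longrightarrow> (\<forall>a\<in>TT. \<psi> a = \<phi> a)))"

end

theory Submission imports Defs begin


abbreviation disj :: "nat set \<Rightarrow> nat set \<Rightarrow> bool" where "disj X Y \<equiv> X \<inter> Y = {}"

lemma l1: "(\<forall>i<length Ps. \<forall>j<length Ps. i \<noteq> j \<longrightarrow> Ps ! i \<inter> Ps ! j = {}) \<longleftrightarrow> sorted_wrt disj Ps"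
proof
  assume H: "\<forall>i<length Ps. \<forall>j<length Ps. i \<noteq> j \<longrightarrow> Ps ! i \<inter> Ps ! j = {}"
  show "sorted_wrt disj Ps" unfolding sorted_wrt_iff_nth_less
  proof (intro allI impI)
    fix i j assume "i < j" "j < length Ps"
    then show "disj (Ps ! i) (Ps ! j)" using H by simp
  qed
next
  assume S: "sorted_wrt disj Ps"
  show "\<forall>i<length Ps. \<forall>j<length Ps. i \<noteq> j \<longrightarrow> Ps ! i \<inter> Ps ! j = {}"
  proof (intro allI impI)
    fix i j assume ij: "i < length Ps" "j < length Ps" "i \<noteq> j"
    show "Ps ! i \<inter> Ps ! j = {}"
    proof (cases "i < j")
      case True then show ?thesis using S ij unfolding sorted_wrt_iff_nth_less by blast
    next
      case False then have "j < i" using ij by simp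
      then have "Ps ! j \<inter> Ps ! i = {}" using S ij unfolding sorted_wrt_iff_nth_less by blast
      then show ?thesis by (simp add: Int_commute)
    qed
  qed
qed
lemma l2: "(\<forall>i<length Ps. Ps ! i \<noteq> {}) \<longleftrightarrow> (\<forall>X\<in>set Ps. X \<noteq> {})"
  by (auto simp: in_set_conv_nth)

lemma is_comp_alt:
  "is_comp_of n Ps \<longleftrightarrow> (\<forall>X\<in>set Ps. X \<noteq> {}) \<and> sorted_wrt disj Ps \<and> \<Union>(set Ps) = {1..n}"
  unfolding is_comp_of_def l1 l2 by blast

lemma Comp_alt: "Ps \<in> Comp n \<longleftrightarrow> (\<forall>X\<in>set Ps. X \<noteq> {}) \<and> sorted_wrt disj Ps \<and> \<Union>(set Ps) = {1..n}"
  by (simp add: Comp_def is_comp_alt)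

lemma comp_size_Comp: "Ps \<in> Comp n \<Longrightarrow> comp_size Ps = n"
  by (simp add: Comp_alt comp_size_def)

lemma shift_set_0[simp]: "shift_set 0 = id"
  by (simp add: shift_set_def fun_eq_iff)

lemma shift_shift: "shift_set n (shift_set m X) = shift_set (n + m) X"
  by (simp add: shift_set_def image_image add.assoc)

lemma rcomp_Nil_left[simp]: "rcomp [] q = q"
  by (simp add: rcomp_def comp_size_def)

lemma rcomp_Nil_right[simp]: "rcomp p [] = p"
  by (simp add: rcomp_def)

lemma shift_set_Int: "shift_set n X \<inter> shift_set n Y = shift_set n (X \<inter> Y)"
  by (auto simp: shift_set_def)

lemma shift_set_interval: "shift_set n {1..m} = {n+1..n+m}"
  unfolding shift_set_def
proof (intro equalityI subsetI)
  fix x assume "x \<in> {n+1..n+m}" then show "x \<in> (+) n ` {1..m}"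
    by (intro image_eqI[of _ _ "x - n"]) auto
qed auto

lemma shift_set_empty[simp]: "shift_set n X = {} \<longleftrightarrow> X = {}"
  by (simp add: shift_set_def)

lemma rcomp_Comp:
  assumes p: "p \<in> Comp n" and q: "q \<in> Comp m"
  shows "rcomp p q \<in> Comp (n + m)"
proof -
  have cs: "comp_size p = n" using p by (rule comp_size_Comp)
  have pne: "\<forall>X\<in>set p. X \<noteq> {}" and psw: "sorted_wrt disj p" and pun: "\<Union>(set p) = {1..n}"
    using p by (simp_all add: Comp_alt)
  have qne: "\<forall>X\<in>set q. X \<noteq> {}" and qsw: "sorted_wrt disj q" and qun: "\<Union>(set q) = {1..m}"
    using q by (simp_all add: Comp_alt)
  have ne: "\<forall>X\<in>set (map (shift_set n) q). X \<noteq> {}" using qne by simp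
  have sq: "sorted_wrt disj (map (shift_set n) q)"
    using qsw by (simp add: sorted_wrt_map shift_set_Int)
  have un: "\<Union>(set (map (shift_set n) q)) = {n+1..n+m}"
  proof -
    have "\<Union>(set (map (shift_set n) q)) = shift_set n (\<Union>(set q))"
      by (auto simp: shift_set_def)
    also have "\<dots> = {n+1..n+m}" by (simp only: qun shift_set_interval)
    finally show ?thesis .
  qed
  have cross: "\<forall>X\<in>set p. \<forall>Y\<in>set (map (shift_set n) q). disj X Y"
  proof (intro ballI)
    fix X Y assume X: "X \<in> set p" and Y: "Y \<in> set (map (shift_set n) q)"
    have "X \<subseteq> {1..n}" using X pun by blast
    moreover have "Y \<subseteq> {n+1..n+m}" using Y un by blast
    moreover have "{1..n} \<inter> {n+1..n+m} = {}" by auto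
    ultimately show "disj X Y" by blast
  qed
  have "{1..n} \<union> {n+1..n+m} = {1..n+m}" by auto
  then have "\<Union>(set (p @ map (shift_set n) q)) = {1..n+m}" using pun un by simp
  moreover have "sorted_wrt disj (p @ map (shift_set n) q)"
    using psw sq cross by (simp add: sorted_wrt_append)
  moreover have "\<forall>X\<in>set (p @ map (shift_set n) q). X \<noteq> {}" using pne ne by (metis Un_iff set_append)
  ultimately show ?thesis by (simp add: Comp_alt rcomp_def cs)
qed

lemma rcomp_assoc:
  assumes p: "p \<in> Comp n" and q: "q \<in> Comp m"
  shows "rcomp (rcomp p q) r = rcomp p (rcomp q r)"
proof -
  have "comp_size (rcomp p q) = n + m" using rcomp_Comp[OF p q] by (rule comp_size_Comp)
  then show ?thesis using comp_size_Comp[OF p] comp_size_Comp[OF q]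
    by (simp add: rcomp_def shift_shift)
qed


definition unshift_set :: "nat \<Rightarrow> nat set \<Rightarrow> nat set" where
  "unshift_set m X = (\<lambda>x. x - m) ` X"

lemma unshift_shift[simp]: "unshift_set m (shift_set m X) = X"
  by (simp add: unshift_set_def shift_set_def image_image)

lemma unshift_o_shift[simp]: "unshift_set m \<circ> shift_set m = id"
  by (simp add: fun_eq_iff)

lemma shift_unshift: "X \<subseteq> {m<..} \<Longrightarrow> shift_set m (unshift_set m X) = X"
  unfolding unshift_set_def shift_set_def image_image
proof (intro equalityI subsetI)
  fix x assume "X \<subseteq> {m<..}" "x \<in> X"
  then show "x \<in> (\<lambda>x. m + (x - m)) ` X" by (intro image_eqI[of _ _ x]) auto
next
  fix x assume "X \<subseteq> {m<..}" "x \<in> (\<lambda>x. m + (x - m)) ` X"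
  then show "x \<in> X" by auto
qed

lemma decomp:
  assumes p: "p \<in> Comp n" and pne: "p \<noteq> []"
  shows "\<exists>g q m. g \<in> Comp m \<and> reduced g \<and> g \<noteq> [] \<and> q \<in> Comp (n - m) \<and> p = rcomp g q
           \<and> length q < length p"
proof -
  define P where "P = (\<lambda>a. 1 \<le> a \<and> (\<exists>m. \<Union>(set (take a p)) = {1..m}))"
  have Pl: "P (length p)" using p pne by (auto simp: P_def Comp_alt Suc_le_eq)
  define a where "a = (LEAST a. P a)"
  have Pa: "P a" unfolding a_def using Pl by (rule LeastI)
  have aminl: "\<And>b. b < a \<Longrightarrow> \<not> P b" unfolding a_def by (rule not_less_Least)
  have ale: "a \<le> length p" unfolding a_def using Pl by (rule Least_le)
  from Pa obtain m where a1: "1 \<le> a" and m: "\<Union>(set (take a p)) = {1..m}" by (auto simp: P_def)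
  define g where "g = take a p"
  define r where "r = drop a p"
  have pgr: "p = g @ r" by (simp add: g_def r_def)
  have ne: "\<forall>X\<in>set p. X \<noteq> {}" and sw: "sorted_wrt disj p" and un: "\<Union>(set p) = {1..n}"
    using p by (auto simp: Comp_alt)
  have swg: "sorted_wrt disj g" and swr: "sorted_wrt disj r"
    and cross: "\<forall>X\<in>set g. \<forall>Y\<in>set r. disj X Y"
    using sw unfolding pgr sorted_wrt_append by auto
  have gC: "g \<in> Comp m" using ne swg m unfolding Comp_alt g_def
    by (auto dest: in_set_takeD)
  have gne: "g \<noteq> []" using a1 pne by (simp add: g_def)
  have red: "reduced g"
    unfolding reduced_def
  proof
    assume "\<exists>b m'. 1 \<le> b \<and> b < length g \<and> m' < comp_size g \<and> \<Union> (set (take b g)) = {1..m'}"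
    then obtain b m' where b: "1 \<le> b" "b < length g" "\<Union> (set (take b g)) = {1..m'}" by blast
    have "b < a" using b(2) ale by (simp add: g_def)
    moreover have "take b g = take b p" using \<open>b < a\<close> by (simp add: g_def)
    hence "P b" using b unfolding P_def by auto
    ultimately show False using aminl by blast
  qed
  have mn: "m \<le> n"
  proof -
    have "\<Union>(set g) \<subseteq> \<Union>(set p)" by (simp add: g_def Union_mono set_take_subset)
    then have "{1..m} \<subseteq> {1..n}" using un m by (simp add: g_def)
    then show ?thesis by (cases "m = 0") auto
  qed
  have rsub: "\<forall>X\<in>set r. X \<subseteq> {m<..n}"
  proof
    fix X assume X: "X \<in> set r"
    have "X \<subseteq> {1..n}" using X un pgr by auto
    moreover have "X \<inter> {1..m} = {}" using cross X m[folded g_def] by blast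
    ultimately show "X \<subseteq> {m<..n}"
    proof (intro subsetI)
      fix x assume "X \<subseteq> {1..n}" "X \<inter> {1..m} = {}" "x \<in> X"
      then have "x \<in> {1..n}" "x \<notin> {1..m}" by blast+
      then show "x \<in> {m<..n}" by auto
    qed
  qed
  define q where "q = map (unshift_set m) r"
  have unr: "\<Union>(set r) = {m<..n}"
  proof -
    have "\<Union>(set g) \<union> \<Union>(set r) = {1..n}" using un pgr by (metis Union_Un_distrib set_append)
    then have "\<Union>(set r) \<union> {1..m} = {1..n}" using m[folded g_def] by blast
    then show ?thesis using rsub mn by auto
  qed
  have qC: "q \<in> Comp (n - m)"
    unfolding Comp_alt
  proof (intro conjI)
    show "\<forall>X\<in>set q. X \<noteq> {}" using ne pgr by (auto simp: q_def unshift_set_def)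
    have "sorted_wrt (\<lambda>X Y. disj (unshift_set m X) (unshift_set m Y)) r"
      using swr
    proof (rule sorted_wrt_mono_rel[rotated])
      fix X Y assume XY: "X \<in> set r" "Y \<in> set r" "disj X Y"
      show "disj (unshift_set m X) (unshift_set m Y)"
      proof (rule ccontr)
        assume "\<not> ?thesis"
        then obtain x y where "x \<in> X" "y \<in> Y" "x - m = y - m" by (auto simp: unshift_set_def)
        moreover have "x > m" using rsub XY(1) \<open>x \<in> X\<close> by (meson greaterThanAtMost_iff subsetD)
        moreover have "y > m" using rsub XY(2) \<open>y \<in> Y\<close> by (meson greaterThanAtMost_iff subsetD)
        ultimately have "x = y" by simp
        then show False using XY \<open>x \<in> X\<close> \<open>y \<in> Y\<close> by auto
      qed
    qed
    then show "sorted_wrt disj q" by (simp add: q_def sorted_wrt_map)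
    have "\<Union>(set q) = (\<lambda>x. x - m) ` {m<..n}" by (auto simp: q_def unshift_set_def unr[symmetric])
    also have "\<dots> = {1..n-m}"
    proof (intro equalityI subsetI)
      fix x assume "x \<in> {1..n-m}" then show "x \<in> (\<lambda>x. x - m) ` {m<..n}"
        by (intro image_eqI[of _ _ "x + m"]) auto
    qed auto
    finally show "\<Union>(set q) = {1..n-m}" .
  qed
  have "rcomp g q = p"
  proof -
    have "map (shift_set m) q = r" unfolding q_def
      using rsub by (induction r) (auto simp: shift_unshift greaterThanAtMost_def)
    then show ?thesis using comp_size_Comp[OF gC] pgr by (simp add: rcomp_def)
  qed
  moreover have "length q < length p" using a1 pne ale by (simp add: q_def r_def)
  ultimately show ?thesis using gC red gne qC by blast
qed

definition fa :: "nat set list \<Rightarrow> nat" where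
  "fa p = (LEAST a. 1 \<le> a \<and> (length p \<le> a \<or> (\<exists>m. \<Union>(set (take a p)) = {1..m})))"

lemma fa_pos: "1 \<le> fa p"
proof -
  have "1 \<le> max 1 (length p) \<and> (length p \<le> max 1 (length p) \<or> (\<exists>m. \<Union>(set (take (max 1 (length p)) p)) = {1..m}))"
    by simp
  then show ?thesis unfolding fa_def by (rule LeastI2) auto
qed

function FF :: "(nat set list \<Rightarrow> 'a::monoid_mult) \<Rightarrow> nat set list \<Rightarrow> 'a" where
  "FF f p = (if p = [] then 1 else f (take (fa p) p) *
      FF f (map (unshift_set (comp_size (take (fa p) p))) (drop (fa p) p)))"
  by auto
termination
proof (relation "measure (\<lambda>(f, p). length p)")
  fix f :: "nat set list \<Rightarrow> 'a" and p :: "nat set list"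
  assume "p \<noteq> []"
  moreover have "0 < fa p" using fa_pos[of p] by simp
  ultimately show "((f, map (unshift_set (comp_size (take (fa p) p))) (drop (fa p) p)), f, p)
       \<in> measure (\<lambda>(f, p). length p)" by simp
qed auto

declare FF.simps[simp del]

lemma FF_Nil[simp]: "FF f [] = 1"
  by (subst FF.simps) simp

lemma FF_gen:
  assumes g: "g \<in> Comp m" and gne: "g \<noteq> []" and red: "reduced g"
  shows "FF f (rcomp g q) = f g * FF f q"
proof -
  let ?P = "rcomp g q"
  have cs: "comp_size g = m" using g by (rule comp_size_Comp)
  have tk: "take (length g) ?P = g" and dr: "drop (length g) ?P = map (shift_set m) q"
    by (simp_all add: rcomp_def cs)
  have ne: "\<forall>X\<in>set g. X \<noteq> {}" and sw: "sorted_wrt disj g" and un: "\<Union>(set g) = {1..m}"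
    using g by (auto simp: Comp_alt)
  have "fa ?P = length g"
    unfolding fa_def
  proof (rule Least_equality)
    show "1 \<le> length g \<and> (length ?P \<le> length g \<or> (\<exists>m. \<Union>(set (take (length g) ?P)) = {1..m}))"
      using gne tk un by (auto simp: Suc_le_eq)
  next
    fix y assume y: "1 \<le> y \<and> (length ?P \<le> y \<or> (\<exists>m. \<Union>(set (take y ?P)) = {1..m}))"
    show "length g \<le> y"
    proof (rule ccontr)
      assume "\<not> length g \<le> y"
      hence yl: "y < length g" by simp
      hence "\<not> length ?P \<le> y" by (simp add: rcomp_def)
      with y obtain m' where m': "\<Union>(set (take y ?P)) = {1..m'}" by auto
      have tky: "take y ?P = take y g" using yl by (simp add: rcomp_def)
      have "\<not> m' < m" using red y yl m' tky cs unfolding reduced_def by auto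
      moreover have "{1..m'} \<subseteq> {1..m}" using m'[unfolded tky] un
        by (metis Union_mono set_take_subset)
      ultimately have "m' = m"
      proof -
        assume a1: "\<not> m' < m" and a2: "{1..m'} \<subseteq> {1..m}"
        show "m' = m"
        proof (rule ccontr)
          assume "m' \<noteq> m"
          hence "m < m'" using a1 by simp
          hence "m' \<in> {1..m'}" by simp
          hence "m' \<in> {1..m}" using a2 by blast
          thus False using \<open>m < m'\<close> by simp
        qed
      qed
      hence tu: "\<Union>(set (take y g)) = {1..m}" using m' tky by simp
      have "drop y g \<noteq> []" using yl by simp
      then obtain X where X: "X \<in> set (drop y g)" by (cases "drop y g") auto
      have "X \<noteq> {}" using X ne by (auto dest: in_set_dropD)
      moreover have "X \<subseteq> {1..m}" using X un by (auto dest: in_set_dropD)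
      moreover have "\<forall>Y\<in>set (take y g). disj Y X"
      proof -
        have "sorted_wrt disj (take y g @ drop y g)" using sw by simp
        then have "\<forall>Y\<in>set (take y g). \<forall>Z\<in>set (drop y g). disj Y Z"
          by (subst (asm) sorted_wrt_append) blast
        then show ?thesis using X by blast
      qed
      ultimately show False using tu by blast
    qed
  qed
  then show ?thesis
  proof -
    assume fa: "fa ?P = length g"
    have Pne: "?P \<noteq> []" using gne by (simp add: rcomp_def)
    show ?thesis using Pne by (subst FF.simps) (simp add: fa tk dr cs)
  qed
qed

lemma FF_mult:
  assumes "p \<in> Comp n" and q: "q \<in> Comp k"
  shows "FF f (rcomp p q) = FF f p * FF f q"
  using assms(1)
proof (induction "length p" arbitrary: p n rule: less_induct)
  case less
  show ?case
  proof (cases "p = []")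
    case True then show ?thesis by simp
  next
    case False
    from decomp[OF less.prems False] obtain g p' m where
      d: "g \<in> Comp m" "reduced g" "g \<noteq> []" "p' \<in> Comp (n - m)" "p = rcomp g p'" "length p' < length p"
      by blast
    have "rcomp p q = rcomp g (rcomp p' q)" using d rcomp_assoc by blast
    then have "FF f (rcomp p q) = f g * FF f (rcomp p' q)"
      using FF_gen[OF d(1) d(3) d(2)] by simp
    also have "\<dots> = f g * (FF f p' * FF f q)" using less.hyps[OF d(6) d(4)] by simp
    also have "\<dots> = FF f p * FF f q"
    proof -
      have e: "FF f p = f g * FF f p'" using FF_gen[OF d(1) d(3) d(2), of f p'] d(5) by simp
      show ?thesis by (simp add: e mult.assoc)
    qed
    finally show ?thesis .
  qed
qed



lemma AllComp_iff: "p \<in> AllComp \<longleftrightarrow> (\<exists>n. p \<in> Comp n)"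
  by (simp add: AllComp_def)

lemma cmul_of: "frag_cmul c (frag_of x) = Poly_Mapping.single x c"
  by (rule poly_mapping_eqI) (simp add: lookup_single when_def)

lemma cmul_single: "frag_cmul c (Poly_Mapping.single x d) = Poly_Mapping.single x (c * d)"
  by (rule poly_mapping_eqI) (simp add: lookup_single when_def)

lemma frag_cmul_diff2: "frag_cmul c (x - y) = frag_cmul c x - frag_cmul c y"
  by (rule poly_mapping_eqI) (simp add: lookup_minus algebra_simps)

lemma frag_extend_fun_diff:
  "frag_extend (\<lambda>p. g p - h p) a = frag_extend g a - frag_extend h a"
  by (simp add: frag_extend_def frag_cmul_diff2 sum_subtractf)

lemma rprod_alt: "rprod a b = frag_extend (\<lambda>p. frag_extend (\<lambda>q. frag_of (rcomp p q)) b) a"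
  by (simp add: rprod_def frag_extend_def frag_cmul_sum cmul_single)

lemma rprod_diff_left: "rprod (a - a') b = rprod a b - rprod a' b"
  by (simp add: rprod_alt frag_extend_diff)

lemma rprod_diff_right: "rprod a (b - b') = rprod a b - rprod a b'"
  by (simp add: rprod_alt frag_extend_diff frag_extend_fun_diff)

lemma rprod_zero_left[simp]: "rprod 0 b = 0"
  by (simp add: rprod_alt)

lemma rprod_zero_right[simp]: "rprod a 0 = 0"
  by (simp add: rprod_alt frag_extend_def)

lemma rprod_of: "rprod (frag_of p) (frag_of q) = frag_of (rcomp p q)"
  by (simp add: rprod_alt)

lemma rprod_unit_left: "rprod runit a = a"
  by (simp add: rprod_alt runit_def frag_expansion[symmetric])

lemma rprod_unit_right: "rprod a runit = a"
  by (simp add: rprod_alt runit_def frag_expansion[symmetric])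

lemma rprod_TT: "a \<in> TT \<Longrightarrow> b \<in> TT \<Longrightarrow> rprod a b \<in> TT"
proof -
  assume a: "a \<in> TT" and b: "b \<in> TT"
  have k: "Poly_Mapping.keys (frag_extend (\<lambda>q. frag_of (rcomp p q)) b) \<subseteq> (\<Union>q\<in>Poly_Mapping.keys b. {rcomp p q})" for p
    using keys_frag_extend[of "\<lambda>q. frag_of (rcomp p q)" b] by simp
  have "Poly_Mapping.keys (rprod a b) \<subseteq> (\<Union>p\<in>Poly_Mapping.keys a. Poly_Mapping.keys (frag_extend (\<lambda>q. frag_of (rcomp p q)) b))"
    unfolding rprod_alt by (rule keys_frag_extend)
  also have "\<dots> \<subseteq> (\<Union>p\<in>Poly_Mapping.keys a. \<Union>q\<in>Poly_Mapping.keys b. {rcomp p q})"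
    using k by (rule UN_mono[OF order_refl])
  also have "\<dots> \<subseteq> AllComp"
  proof (intro UN_least)
    fix p q assume p: "p \<in> Poly_Mapping.keys a" and q: "q \<in> Poly_Mapping.keys b"
    have "p \<in> AllComp" using p a by (auto simp: TT_def)
    then obtain n where "p \<in> Comp n" unfolding AllComp_iff by blast
    moreover have "q \<in> AllComp" using q b by (auto simp: TT_def)
    then obtain m where "q \<in> Comp m" unfolding AllComp_iff by blast
    ultimately have "rcomp p q \<in> Comp (n + m)" by (rule rcomp_Comp)
    then show "{rcomp p q} \<subseteq> AllComp" by (auto simp: AllComp_iff)
  qed
  finally show ?thesis by (simp add: TT_def)
qed

lemma rprod_assoc:
  assumes a: "a \<in> TT" and b: "b \<in> TT" and c: "c \<in> TT"
  shows "rprod (rprod a b) c = rprod a (rprod b c)"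
  using a[unfolded TT_def, simplified]
proof (induction a rule: frag_induction)
  case zero then show ?case by simp
next
  case (diff a a') then show ?case by (simp add: rprod_diff_left)
next
  case (one x)
  show ?case using b[unfolded TT_def, simplified]
  proof (induction b rule: frag_induction)
    case zero then show ?case by simp
  next
    case (diff b b') then show ?case by (simp add: rprod_diff_left rprod_diff_right)
  next
    case (one y)
    show ?case using c[unfolded TT_def, simplified]
    proof (induction c rule: frag_induction)
      case zero then show ?case by simp
    next
      case (diff c c') then show ?case by (simp add: rprod_diff_left rprod_diff_right)
    next
      case (one z)
      obtain n where xn: "x \<in> Comp n" using \<open>x \<in> AllComp\<close> unfolding AllComp_iff by blast
      obtain m where ym: "y \<in> Comp m" using \<open>y \<in> AllComp\<close> unfolding AllComp_iff by blast
      show ?case by (simp add: rprod_of rcomp_assoc[OF xn ym])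
    qed
  qed
qed

definition phi :: "(nat set list \<Rightarrow> 'a::ring_1) \<Rightarrow> (nat set list \<Rightarrow>\<^sub>0 int) \<Rightarrow> 'a" where
  "phi f a = (\<Sum>p\<in>Poly_Mapping.keys a. of_int (Poly_Mapping.lookup a p) * FF f p)"

lemma phi_add: "phi f (a + b) = phi f a + phi f b"
  unfolding phi_def by (rule setsum_keys_plus_distrib) (auto simp: distrib_right)

lemma phi_zero[simp]: "phi f 0 = 0"
  by (simp add: phi_def)

lemma phi_diff: "phi f (a - b) = phi f a - phi f b"
  using phi_add[of f "a - b" b] by (simp add: eq_diff_eq)

lemma phi_of: "phi f (frag_of x) = FF f x"
  by (simp add: phi_def)

lemma phi_mult:
  assumes a: "a \<in> TT" and b: "b \<in> TT"
  shows "phi f (rprod a b) = phi f a * phi f b"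
  using a[unfolded TT_def, simplified]
proof (induction a rule: frag_induction)
  case zero then show ?case by simp
next
  case (diff a a') then show ?case by (simp add: rprod_diff_left phi_diff left_diff_distrib)
next
  case (one x)
  show ?case using b[unfolded TT_def, simplified]
  proof (induction b rule: frag_induction)
    case zero then show ?case by simp
  next
    case (diff b b') then show ?case by (simp add: rprod_diff_right phi_diff right_diff_distrib)
  next
    case (one y)
    obtain n where xn: "x \<in> Comp n" using \<open>x \<in> AllComp\<close> unfolding AllComp_iff by blast
    obtain m where ym: "y \<in> Comp m" using \<open>y \<in> AllComp\<close> unfolding AllComp_iff by blast
    show ?case by (simp add: rprod_of phi_of FF_mult[OF xn ym])
  qed
qed

lemma phi_hom: "is_alg_hom (phi f)"
  unfolding is_alg_hom_def by (simp add: phi_add phi_mult runit_def phi_of)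

lemma of_TT: "p \<in> AllComp \<Longrightarrow> frag_of p \<in> TT"
  by (simp add: TT_def)

lemma hom_unique_of:
  assumes h: "is_alg_hom \<psi>" and gen: "\<forall>x\<in>Generators. \<psi> (frag_of x) = f x"
    and p: "p \<in> Comp n"
  shows "\<psi> (frag_of p) = FF f p"
  using p
proof (induction "length p" arbitrary: p n rule: less_induct)
  case less
  show ?case
  proof (cases "p = []")
    case True then show ?thesis using h by (simp add: is_alg_hom_def runit_def)
  next
    case False
    from decomp[OF less.prems False] obtain g p' m where
      d: "g \<in> Comp m" "reduced g" "g \<noteq> []" "p' \<in> Comp (n - m)" "p = rcomp g p'" "length p' < length p"
      by blast
    have gT: "frag_of g \<in> TT" and pT: "frag_of p' \<in> TT" using d by (auto intro!: of_TT simp: AllComp_iff)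
    have "\<psi> (frag_of p) = \<psi> (rprod (frag_of g) (frag_of p'))" using d(5) by (simp add: rprod_of)
    also have "\<dots> = \<psi> (frag_of g) * \<psi> (frag_of p')" using h gT pT by (simp add: is_alg_hom_def)
    also have "\<dots> = f g * FF f p'" using gen d less.hyps[OF d(6) d(4)]
      by (auto simp: Generators_def AllComp_iff)
    also have "\<dots> = FF f p" using FF_gen[OF d(1) d(3) d(2), of f p'] d(5) by simp
    finally show ?thesis .
  qed
qed

lemma hom_unique:
  assumes h: "is_alg_hom \<psi>" and gen: "\<forall>x\<in>Generators. \<psi> (frag_of x) = f x"
    and a: "a \<in> TT"
  shows "\<psi> a = phi f a"
proof -
  have z: "\<psi> 0 = 0"
  proof -
    have "0 \<in> TT" by (simp add: TT_def)
    then have "\<psi> (0 + 0) = \<psi> 0 + \<psi> 0" using h unfolding is_alg_hom_def by blast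
    then show ?thesis by simp
  qed
  have "a \<in> TT \<and> \<psi> a = phi f a"
    using a[unfolded TT_def, simplified]
  proof (induction a rule: frag_induction)
    case zero then show ?case using z by (simp add: TT_def)
  next
    case (diff a b)
    have abT: "a - b \<in> TT" using diff keys_diff[of a b] by (auto simp: TT_def)
    have "\<psi> ((a - b) + b) = \<psi> (a - b) + \<psi> b" using h abT diff unfolding is_alg_hom_def by blast
    then have "\<psi> (a - b) = \<psi> a - \<psi> b" by (simp add: eq_diff_eq)
    then show ?case using abT diff by (simp add: phi_diff)
  next
    case (one x)
    then obtain n where xn: "x \<in> Comp n" unfolding AllComp_iff by blast
    show ?case using hom_unique_of[OF h gen xn] \<open>x \<in> AllComp\<close> by (simp add: phi_of of_TT)
  qed
  then show ?thesis by simp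
qed

theorem proposition3p1:
  "(\<forall>a\<in>TT. \<forall>b\<in>TT. \<forall>c\<in>TT. rprod (rprod a b) c = rprod a (rprod b c)) \<and>
   (\<forall>a\<in>TT. rprod runit a = a \<and> rprod a runit = a) \<and>
   (\<forall>a\<in>TT. \<forall>b\<in>TT. rprod a b \<in> TT) \<and>
   freely_generated_by Generators TYPE('a::ring_1)"
proof (intro conjI ballI)
  show "freely_generated_by Generators TYPE('a::ring_1)"
    unfolding freely_generated_by_def
  proof
    fix f :: "nat set list \<Rightarrow> 'a"
    show "\<exists>\<phi>. is_alg_hom \<phi> \<and> (\<forall>x\<in>Generators. \<phi> (frag_of x) = f x) \<and>
           (\<forall>\<psi>. is_alg_hom \<psi> \<and> (\<forall>x\<in>Generators. \<psi> (frag_of x) = f x) \<longrightarrow> (\<forall>a\<in>TT. \<psi> a = \<phi> a))"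
    proof (intro exI[of _ "phi f"] conjI ballI allI impI)
      show "is_alg_hom (phi f)" by (rule phi_hom)
    next
      fix x assume "x \<in> Generators"
      then obtain n where x: "x \<in> Comp n" "x \<noteq> []" "reduced x"
        by (auto simp: Generators_def AllComp_iff)
      have "FF f x = FF f (rcomp x [])" by simp
      also have "\<dots> = f x" using FF_gen[OF x(1) x(2) x(3), of f "[]"] by simp
      finally show "phi f (frag_of x) = f x" by (simp add: phi_of)
    next
      fix \<psi> a assume "is_alg_hom \<psi> \<and> (\<forall>x\<in>Generators. \<psi> (frag_of x) = f x)" "a \<in> TT"
      then show "\<psi> a = phi f a" using hom_unique by blast
    qed
  qed
next
  fix a b c assume "a \<in> TT" "b \<in> TT" "c \<in> TT"
  then show "rprod (rprod a b) c = rprod a (rprod b c)" by (rule rprod_assoc)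
next
  fix a show "rprod runit a = a" by (rule rprod_unit_left)
next
  fix a show "rprod a runit = a" by (rule rprod_unit_right)
next
  fix a b assume "a \<in> TT" "b \<in> TT"
  then show "rprod a b \<in> TT" by (rule rprod_TT)
qed

end
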